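(* Let $A_1,A_2,A_3,A_4\in\mathbb{R}^3$ be four non-coplanar points such that for every $i\in\{1,2,3,4\}$, $\big\|\sum_{j\neq i}\vec u(A_j,A_i)\big\|>1$, and let $A_0$ be the Fermat–Torricelli point of $A_1A_2A_3A_4$ (so $A_0$ is not a vertex and $\sum_{i=1}^4\vec u(A_0,A_i)=\vec 0$). For $i\neq j$ let $\vec\delta_{i0j}=\vec u(A_0,A_i)+\vec u(A_0,A_j)$, a direction vector of the bisector of the angle $\angle A_iA_0A_j$. Then: (1) the bisectors of each pair of angles subtended at $A_0$ by opposite edges lie on a common line through $A_0$, namely $$\frac{\vec\delta_{102}}{\|\vec\delta_{102}\|}\cdot\frac{\vec\delta_{304}}{\|\vec\delta_{304}\|}=\frac{\vec\delta_{203}}{\|\vec\delta_{203}\|}\cdot\frac{\vec\delta_{104}}{\|\vec\delta_{104}\|}=\frac{\vec\delta_{103}}{\|\vec\delta_{103}\|}\cdot\frac{\vec\delta_{204}}{\|\vec\delta_{204}\|}=-1;$$ (2) these three lines (with directions $\vec\delta_{102},\vec\delta_{103},\vec\delta_{104}$) are pairwise perpendicular at $A_0$: $$\vec\delta_{102}\cdot\vec\delta_{103}=\vec\delta_{102}\cdot\vec\delta_{104}=\vec\delta_{103}\cdot\vec\delta_{104}=0.$$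
   Context: For distinct points $P,Q\in\mathbb{R}^3$, $\vec u(P,Q)=\frac{Q-P}{\|Q-P\|}$ denotes the unit vector from $P$ to $Q$. The Fermat–Torricelli point of the tetrahedron is the minimizer over $A_0\in\mathbb{R}^3$ of $\sum_{i=1}^4\|A_0-A_i\|$; under the stated condition it is not a vertex and satisfies $\sum_{i=1}^4\vec u(A_0,A_i)=\vec 0$. The opposite edge pairs of the tetrahedron are $\{A_1A_2,A_3A_4\}$, $\{A_2A_3,A_1A_4\}$, $\{A_1A_3,A_2A_4\}$, and the corresponding angles at $A_0$ are $\angle A_iA_0A_j$. *)

theory Defs
  imports "HOL-Analysis.Analysis"
begin

text \<open>Unit vector from P to Q (meaningful for P \<noteq> Q).\<close>
definition uvec :: "real^3 \<Rightarrow> real^3 \<Rightarrow> real^3" where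
  "uvec P Q = (Q - P) /\<^sub>R norm (Q - P)"

definition is_FT_point :: "(nat \<Rightarrow> real^3) \<Rightarrow> real^3 \<Rightarrow> bool" where
  "is_FT_point A A0 \<longleftrightarrow>
     (\<forall>X. (\<Sum>i\<in>{1..4}. norm (A0 - A i)) \<le> (\<Sum>i\<in>{1..4}. norm (X - A i)))"

end

theory Submission
  imports Defs
begin

lemma uvec_decomp: "Q = P + norm (Q - P) *\<^sub>R uvec P Q"
  by (cases "Q = P") (simp_all add: uvec_def)

lemma norm_uvec: "P \<noteq> Q \<Longrightarrow> norm (uvec P Q) = 1"
  by (simp add: uvec_def)

lemma uvec_swap: "uvec P Q = - uvec Q P"
  by (metis uvec_def minus_diff_eq norm_minus_commute scaleR_minus_right)

lemma step:
  fixes P Q v :: "real^3"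
  assumes "P \<noteq> Q"
  shows "norm (P + t *\<^sub>R v - Q) \<le> norm (P - Q) - t * (uvec P Q \<bullet> v) + t\<^sup>2 * (norm v)\<^sup>2 / (2 * norm (P - Q))"
proof -
  define a where "a = P - Q"
  define n where "n = norm a"
  have n: "n > 0" using assms by (simp add: n_def a_def)
  have e: "P + t *\<^sub>R v - Q = a + t *\<^sub>R v" by (simp add: a_def algebra_simps)
  have sq: "(norm (a + t *\<^sub>R v))\<^sup>2 = n\<^sup>2 + 2 * t * (a \<bullet> v) + t\<^sup>2 * (norm v)\<^sup>2"
  proof -
    have "(norm (a + t *\<^sub>R v))\<^sup>2 = (a + t *\<^sub>R v) \<bullet> (a + t *\<^sub>R v)" by (simp add: power2_norm_eq_inner)
    also have "\<dots> = a \<bullet> a + 2 * t * (a \<bullet> v) + t\<^sup>2 * (v \<bullet> v)"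
      by (simp add: inner_add_left inner_add_right inner_commute algebra_simps power2_eq_square)
    finally show ?thesis by (simp add: n_def power2_norm_eq_inner)
  qed
  have u: "uvec P Q \<bullet> v = - (a \<bullet> v) / n"
    by (simp add: uvec_def a_def n_def norm_minus_commute inner_diff_left divide_inverse ac_simps)
  have am: "2 * n * norm (a + t *\<^sub>R v) \<le> n\<^sup>2 + (norm (a + t *\<^sub>R v))\<^sup>2"
    using sum_squares_bound[of n "norm (a + t *\<^sub>R v)"] by (simp add: power2_eq_square algebra_simps)
  have "norm (a + t *\<^sub>R v) \<le> (n\<^sup>2 + (norm (a + t *\<^sub>R v))\<^sup>2) / (2*n)"
    using am n by (simp add: field_simps)
  also have "\<dots> = (n\<^sup>2 + (n\<^sup>2 + 2 * t * (a \<bullet> v) + t\<^sup>2 * (norm v)\<^sup>2)) / (2*n)"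
    by (simp only: sq)
  also have "\<dots> = n - t * (- (a \<bullet> v) / n) + t\<^sup>2 * (norm v)\<^sup>2 / (2 * n)"
    using n by (simp add: field_simps power2_eq_square)
  finally show ?thesis unfolding e u n_def a_def by simp
qed

lemma descent:
  fixes c D :: real
  assumes "c > 0" "D \<ge> 0"
  shows "\<exists>t>0. - t * c + t\<^sup>2 * D < 0"
proof (intro exI[of _ "c/(D+1)"] conjI)
  show "c/(D+1) > 0" using assms by simp
  have "c/(D+1) * D < c" using assms by (simp add: field_simps)
  then have "c/(D+1) * (c/(D+1) * D - c) < 0" using assms by (intro mult_pos_neg) auto
  then show "- (c/(D+1)) * c + (c/(D+1))\<^sup>2 * D < 0" by (simp add: power2_eq_square algebra_simps)
qed


lemma grad:
  fixes p a b c d :: "real^3"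
  assumes "p \<noteq> a" "p \<noteq> b" "p \<noteq> c" "p \<noteq> d"
    and min: "\<forall>X. norm (p - a) + norm (p - b) + norm (p - c) + norm (p - d)
               \<le> norm (X - a) + norm (X - b) + norm (X - c) + norm (X - d)"
  shows "uvec p a + uvec p b + uvec p c + uvec p d = 0"
proof (rule ccontr)
  define w where "w = uvec p a + uvec p b + uvec p c + uvec p d"
  assume "\<not> (uvec p a + uvec p b + uvec p c + uvec p d = 0)"
  then have "w \<noteq> 0" unfolding w_def .
  then have c: "(norm w)\<^sup>2 > 0" by simp
  define D where "D = (norm w)\<^sup>2 / (2 * norm (p - a)) + (norm w)\<^sup>2 / (2 * norm (p - b))
     + (norm w)\<^sup>2 / (2 * norm (p - c)) + (norm w)\<^sup>2 / (2 * norm (p - d))"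
  have D: "D \<ge> 0" unfolding D_def by simp
  obtain t where t: "t > 0" "- t * (norm w)\<^sup>2 + t\<^sup>2 * D < 0" using descent[OF c D] by blast
  have ww: "uvec p a \<bullet> w + uvec p b \<bullet> w + uvec p c \<bullet> w + uvec p d \<bullet> w = (norm w)\<^sup>2"
    by (simp add: w_def power2_norm_eq_inner inner_add_left)
  have "norm (p + t *\<^sub>R w - a) + norm (p + t *\<^sub>R w - b) + norm (p + t *\<^sub>R w - c) + norm (p + t *\<^sub>R w - d)
     \<le> norm (p - a) + norm (p - b) + norm (p - c) + norm (p - d) - t * (norm w)\<^sup>2 + t\<^sup>2 * D"
  proof -
    have hs: "t * (uvec p a \<bullet> w) + t * (uvec p b \<bullet> w) + t * (uvec p c \<bullet> w) + t * (uvec p d \<bullet> w) = t * (norm w)\<^sup>2"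
      using ww by (simp add: distrib_left[symmetric])
    have hD: "t\<^sup>2 * D = t\<^sup>2 * (norm w)\<^sup>2 / (2 * norm (p - a)) + t\<^sup>2 * (norm w)\<^sup>2 / (2 * norm (p - b))
     + t\<^sup>2 * (norm w)\<^sup>2 / (2 * norm (p - c)) + t\<^sup>2 * (norm w)\<^sup>2 / (2 * norm (p - d))"
      unfolding D_def by (simp add: algebra_simps)
    show ?thesis
      using step[OF assms(1), of t w] step[OF assms(2), of t w] step[OF assms(3), of t w] step[OF assms(4), of t w] hs hD
      by linarith
  qed
  with t min[rule_format, of "p + t *\<^sub>R w"] show False by linarith
qed

lemma nonvertex:
  fixes p a b c :: "real^3"
  assumes "p \<noteq> a" "p \<noteq> b" "p \<noteq> c"
    and gt: "norm (uvec a p + uvec b p + uvec c p) > 1"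
  shows "\<exists>X. norm (X - p) + norm (X - a) + norm (X - b) + norm (X - c)
               < norm (p - a) + norm (p - b) + norm (p - c)"
proof -
  define w where "w = uvec a p + uvec b p + uvec c p"
  have c: "(norm w)\<^sup>2 - norm w > 0" using gt unfolding w_def[symmetric]
    by (simp add: power2_eq_square) (smt (verit) mult_less_cancel_right1)
  define D where "D = (norm w)\<^sup>2 / (2 * norm (p - a)) + (norm w)\<^sup>2 / (2 * norm (p - b))
     + (norm w)\<^sup>2 / (2 * norm (p - c))"
  have D: "D \<ge> 0" unfolding D_def by simp
  obtain t where t: "t > 0" "- t * ((norm w)\<^sup>2 - norm w) + t\<^sup>2 * D < 0" using descent[OF c D] by blast
  have ww: "uvec p a \<bullet> (-w) + uvec p b \<bullet> (-w) + uvec p c \<bullet> (-w) = (norm w)\<^sup>2"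
    by (simp add: w_def power2_norm_eq_inner inner_add_left inner_add_right uvec_swap[of p] inner_diff_right inner_commute)
  have "norm (p + t *\<^sub>R (-w) - a) + norm (p + t *\<^sub>R (-w) - b) + norm (p + t *\<^sub>R (-w) - c)
     \<le> norm (p - a) + norm (p - b) + norm (p - c) - t * (norm w)\<^sup>2 + t\<^sup>2 * D"
  proof -
    have hs: "t * (uvec p a \<bullet> (-w)) + t * (uvec p b \<bullet> (-w)) + t * (uvec p c \<bullet> (-w)) = t * (norm w)\<^sup>2"
      using ww by (simp only: distrib_left[symmetric])
    have hD: "t\<^sup>2 * D = t\<^sup>2 * (norm (-w))\<^sup>2 / (2 * norm (p - a)) + t\<^sup>2 * (norm (-w))\<^sup>2 / (2 * norm (p - b))
     + t\<^sup>2 * (norm (-w))\<^sup>2 / (2 * norm (p - c))"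
      unfolding D_def by (simp add: algebra_simps)
    show ?thesis
      using step[OF assms(1), of t "-w"] step[OF assms(2), of t "-w"] step[OF assms(3), of t "-w"] hs hD
      by linarith
  qed
  moreover have "norm (p + t *\<^sub>R (-w) - p) = t * norm w" using t by simp
  moreover have "t * ((norm w)\<^sup>2 - norm w) = t*(norm w)\<^sup>2 - t*norm w" by (simp add: right_diff_distrib)
  ultimately show ?thesis using t
    by (intro exI[of _ "p + t *\<^sub>R (-w)"]) linarith
qed

lemma copl:
  fixes p a b c d :: "real^3"
  assumes "uvec p a + uvec p b = 0" "uvec p c + uvec p d = 0"
  shows "coplanar {a, b, c, d}"
proof -
  define x where "x = uvec p a"
  define y where "y = uvec p c"
  have hb: "uvec p b = - x" using assms(1) x_def by (simp add: eq_neg_iff_add_eq_0 add.commute)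
  have hd: "uvec p d = - y" using assms(2) y_def by (simp add: eq_neg_iff_add_eq_0 add.commute)
  have mem: "p + r *\<^sub>R x + s *\<^sub>R y \<in> affine hull {p, p + x, p + y}" for r s
    unfolding affine_hull_3
    by (rule CollectI, rule exI[of _ "1 - r - s"], rule exI[of _ r], rule exI[of _ s])
       (simp add: algebra_simps)
  have "a \<in> affine hull {p, p + x, p + y}"
    using mem[of "norm (a - p)" 0] uvec_decomp[of a p] x_def by simp
  moreover have "b \<in> affine hull {p, p + x, p + y}"
    using mem[of "- norm (b - p)" 0] uvec_decomp[of b p] hb by simp
  moreover have "c \<in> affine hull {p, p + x, p + y}"
    using mem[of 0 "norm (c - p)"] uvec_decomp[of c p] y_def by simp
  moreover have "d \<in> affine hull {p, p + x, p + y}"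
    using mem[of 0 "- norm (d - p)"] uvec_decomp[of d p] hd by simp
  ultimately show ?thesis unfolding coplanar_def by blast
qed


lemma neg_unit: "x \<noteq> 0 \<Longrightarrow> (x /\<^sub>R norm x) \<bullet> ((-x) /\<^sub>R norm (-x)) = -1"
  for x :: "real^3"
  by (simp add: power2_norm_eq_inner[symmetric] field_simps power2_eq_square)

theorem mainTheorem2:
  fixes A :: "nat \<Rightarrow> real^3" and A0 :: "real^3"
  assumes noncoplanar: "\<not> coplanar {A 1, A 2, A 3, A 4}"
    and cond: "\<forall>i\<in>{1..4}. norm (\<Sum>j\<in>{1..4} - {i}. uvec (A j) (A i)) > 1"
    and FT: "is_FT_point A A0"
  defines "\<delta> \<equiv> (\<lambda>i j. uvec A0 (A i) + uvec A0 (A j))"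
  shows "(\<delta> 1 2 /\<^sub>R norm (\<delta> 1 2)) \<bullet> (\<delta> 3 4 /\<^sub>R norm (\<delta> 3 4)) = -1
       \<and> (\<delta> 2 3 /\<^sub>R norm (\<delta> 2 3)) \<bullet> (\<delta> 1 4 /\<^sub>R norm (\<delta> 1 4)) = -1
       \<and> (\<delta> 1 3 /\<^sub>R norm (\<delta> 1 3)) \<bullet> (\<delta> 2 4 /\<^sub>R norm (\<delta> 2 4)) = -1
       \<and> \<delta> 1 2 \<bullet> \<delta> 1 3 = 0 \<and> \<delta> 1 2 \<bullet> \<delta> 1 4 = 0 \<and> \<delta> 1 3 \<bullet> \<delta> 1 4 = 0"
proof -
  have I: "{1..4::nat} = {1,2,3,4}" by auto
  have d12: "A 1 \<noteq> A 2" using noncoplanar coplanar_3[of "A 2" "A 3" "A 4"] by auto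
  have d13: "A 1 \<noteq> A 3" using noncoplanar coplanar_3[of "A 2" "A 3" "A 4"] by (auto simp: insert_commute)
  have d14: "A 1 \<noteq> A 4" using noncoplanar coplanar_3[of "A 2" "A 3" "A 4"] by (auto simp: insert_commute)
  have d23: "A 2 \<noteq> A 3" using noncoplanar coplanar_3[of "A 1" "A 3" "A 4"] by (auto simp: insert_commute)
  have d24: "A 2 \<noteq> A 4" using noncoplanar coplanar_3[of "A 1" "A 3" "A 4"] by (auto simp: insert_commute)
  have d34: "A 3 \<noteq> A 4" using noncoplanar coplanar_3[of "A 1" "A 2" "A 4"] by (auto simp: insert_commute)
  have min: "\<forall>X. norm (A0 - A 1) + norm (A0 - A 2) + norm (A0 - A 3) + norm (A0 - A 4)
               \<le> norm (X - A 1) + norm (X - A 2) + norm (X - A 3) + norm (X - A 4)"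
    using FT unfolding is_FT_point_def I by (simp add: add.assoc)
  have c1: "norm (uvec (A 2) (A 1) + uvec (A 3) (A 1) + uvec (A 4) (A 1)) > 1"
  proof -
    have "{1..4::nat} - {1} = {2,3,4}" by auto
    then show ?thesis using cond[rule_format, of 1] by (simp only:) (simp add: add.assoc)
  qed
  have c2: "norm (uvec (A 1) (A 2) + uvec (A 3) (A 2) + uvec (A 4) (A 2)) > 1"
  proof -
    have "{1..4::nat} - {2} = {1,3,4}" by auto
    then show ?thesis using cond[rule_format, of 2] by (simp only:) (simp add: add.assoc)
  qed
  have c3: "norm (uvec (A 1) (A 3) + uvec (A 2) (A 3) + uvec (A 4) (A 3)) > 1"
  proof -
    have "{1..4::nat} - {3} = {1,2,4}" by auto
    then show ?thesis using cond[rule_format, of 3] by (simp only:) (simp add: add.assoc)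
  qed
  have c4: "norm (uvec (A 1) (A 4) + uvec (A 2) (A 4) + uvec (A 3) (A 4)) > 1"
  proof -
    have "{1..4::nat} - {4} = {1,2,3}" by auto
    then show ?thesis using cond[rule_format, of 4] by (simp only:) (simp add: add.assoc)
  qed
  have n1: "A0 \<noteq> A 1"
  proof
    assume e: "A0 = A 1"
    obtain X where "norm (X - A 1) + norm (X - A 2) + norm (X - A 3) + norm (X - A 4)
               < norm (A 1 - A 2) + norm (A 1 - A 3) + norm (A 1 - A 4)"
      using nonvertex[OF d12 d13 d14 c1] by blast
    with min[rule_format, of X] e show False by simp
  qed
  have n2: "A0 \<noteq> A 2"
  proof
    assume e: "A0 = A 2"
    obtain X where "norm (X - A 2) + norm (X - A 1) + norm (X - A 3) + norm (X - A 4)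
               < norm (A 2 - A 1) + norm (A 2 - A 3) + norm (A 2 - A 4)"
      using nonvertex[OF d12[symmetric] d23 d24 c2] by blast
    with min[rule_format, of X] e show False by simp
  qed
  have n3: "A0 \<noteq> A 3"
  proof
    assume e: "A0 = A 3"
    obtain X where "norm (X - A 3) + norm (X - A 1) + norm (X - A 2) + norm (X - A 4)
               < norm (A 3 - A 1) + norm (A 3 - A 2) + norm (A 3 - A 4)"
      using nonvertex[OF d13[symmetric] d23[symmetric] d34 c3] by blast
    with min[rule_format, of X] e show False by simp
  qed
  have n4: "A0 \<noteq> A 4"
  proof
    assume e: "A0 = A 4"
    obtain X where "norm (X - A 4) + norm (X - A 1) + norm (X - A 2) + norm (X - A 3)
               < norm (A 4 - A 1) + norm (A 4 - A 2) + norm (A 4 - A 3)"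
      using nonvertex[OF d14[symmetric] d24[symmetric] d34[symmetric] c4] by blast
    with min[rule_format, of X] e show False by simp
  qed
  define u1 where "u1 = uvec A0 (A 1)"
  define u2 where "u2 = uvec A0 (A 2)"
  define u3 where "u3 = uvec A0 (A 3)"
  define u4 where "u4 = uvec A0 (A 4)"
  have s: "u1 + u2 + u3 + u4 = 0" unfolding u1_def u2_def u3_def u4_def by (rule grad[OF n1 n2 n3 n4 min])
  have e4: "u4 = - (u1 + u2 + u3)"
  proof -
    have "u4 = (u1+u2+u3+u4) - (u1+u2+u3)" by (simp add: algebra_simps)
    then show ?thesis using s by simp
  qed
  have un1: "u1 \<bullet> u1 = 1" using norm_uvec[OF n1] unfolding u1_def by (simp add: norm_eq_1)
  have un2: "u2 \<bullet> u2 = 1" using norm_uvec[OF n2] unfolding u2_def by (simp add: norm_eq_1)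
  have un3: "u3 \<bullet> u3 = 1" using norm_uvec[OF n3] unfolding u3_def by (simp add: norm_eq_1)
  have un4: "u4 \<bullet> u4 = 1" using norm_uvec[OF n4] unfolding u4_def by (simp add: norm_eq_1)
  have pw: "u1 \<bullet> u2 + u1 \<bullet> u3 + u2 \<bullet> u3 = -1"
    using un4 un1 un2 un3 unfolding e4 by (simp add: inner_add_left inner_add_right inner_commute inner_diff_left inner_diff_right)
  have dd: "\<delta> 1 2 = u1 + u2" "\<delta> 3 4 = u3 + u4" "\<delta> 2 3 = u2 + u3" "\<delta> 1 4 = u1 + u4"
     "\<delta> 1 3 = u1 + u3" "\<delta> 2 4 = u2 + u4"
    by (simp_all add: \<delta>_def u1_def u2_def u3_def u4_def)
  have r1: "u3 + u4 = - (u1 + u2)" "u1 + u4 = - (u2 + u3)" "u2 + u4 = - (u1 + u3)"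
    unfolding e4 by (simp_all add: algebra_simps)
  have z12: "u1 + u2 \<noteq> 0"
  proof
    assume h: "u1 + u2 = 0"
    then have "u3 + u4 = 0" using r1 by simp
    then have "coplanar {A 1, A 2, A 3, A 4}" using copl[of A0 "A 1" "A 2" "A 3" "A 4"] h
      unfolding u1_def u2_def u3_def u4_def by simp
    with noncoplanar show False ..
  qed
  have z23: "u2 + u3 \<noteq> 0"
  proof
    assume h: "u2 + u3 = 0"
    then have "u1 + u4 = 0" using r1 by simp
    then have "coplanar {A 2, A 3, A 1, A 4}" using copl[of A0 "A 2" "A 3" "A 1" "A 4"] h
      unfolding u1_def u2_def u3_def u4_def by simp
    with noncoplanar show False by (simp add: insert_commute)
  qed
  have z13: "u1 + u3 \<noteq> 0"
  proof
    assume h: "u1 + u3 = 0"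
    then have "u2 + u4 = 0" using r1 by simp
    then have "coplanar {A 1, A 3, A 2, A 4}" using copl[of A0 "A 1" "A 3" "A 2" "A 4"] h
      unfolding u1_def u2_def u3_def u4_def by simp
    with noncoplanar show False by (simp add: insert_commute)
  qed
  have p1: "(u1 + u2) \<bullet> (u1 + u3) = 0"
    using pw un1 by (simp add: inner_add_left inner_add_right inner_commute inner_diff_left inner_diff_right)
  have p2: "(u1 + u2) \<bullet> (u1 + u4) = 0"
    using pw un1 un2 un3 unfolding e4 by (simp add: inner_add_left inner_add_right inner_commute inner_minus_right inner_diff_left inner_diff_right)
  have p3: "(u1 + u3) \<bullet> (u1 + u4) = 0"
    using pw un1 un2 un3 unfolding e4 by (simp add: inner_add_left inner_add_right inner_commute inner_minus_right inner_diff_left inner_diff_right)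
  show ?thesis
    unfolding dd using neg_unit[OF z12] neg_unit[OF z23] neg_unit[OF z13] p1 p2 p3 r1
    by (simp add: inner_commute)
qed

end
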